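(* Let $\bm{Z}=(Z_1,\ldots,Z_n)^T\in\{0,1\}^n$ with both treatment groups nonempty, and let $\bm{X}\in\mathbb{R}^{n\times p}$ be a covariate matrix whose first column is the all-ones vector, with rows $\bm{X}_1,\ldots,\bm{X}_n$. Let $\sigma^2>0$, $\rho^2\ge 0$, let $\bm{S}$ be an $n\times n$ symmetric positive semidefinite matrix with orthonormal eigenvectors $\bm{v}_1,\ldots,\bm{v}_n$ (where $v_{ki}$ denotes the $i$-th entry of $\bm{v}_k$) and corresponding eigenvalues $\lambda_1\ge\cdots\ge\lambda_n\ge 0$, and set $\bm{\Sigma}=\sigma^2\bm{I}_n+\rho^2\bm{S}$. Assume $\bm{X}^T\bm{\Sigma}^{-1}\bm{X}$ is invertible and $\bm{Z}^T\bm{\Sigma}^{-1}(\bm{I}_n-\bm{X}(\bm{X}^T\bm{\Sigma}^{-1}\bm{X})^{-1}\bm{X}^T\bm{\Sigma}^{-1})\bm{Z}\neq 0$. Consider the quadratic program $$\min_{\bm{w}\in\mathbb{R}^n}\Big\{\sigma^2\sum_{i=1}^n w_i^2+\rho^2\sum_{k=1}^n\lambda_k\Big(\sum_{i:Z_i=1}w_iv_{ki}-\sum_{i:Z_i=0}w_iv_{ki}\Big)^2\Big\}$$ subject to $\sum_{i:Z_i=1}w_i=\sum_{i:Z_i=0}w_i=1$ and $\sum_{i:Z_i=1}w_i\bm{X}_i=\sum_{i:Z_i=0}w_i\bm{X}_i$. Then the solution of this problem is $$\bm{w}=\bm{M}\,\frac{(\bm{I}_n-\bm{\Sigma}^{-1}\bm{X}(\bm{X}^T\bm{\Sigma}^{-1}\bm{X})^{-1}\bm{X}^T)\bm{\Sigma}^{-1}\bm{Z}}{\bm{Z}^T\bm{\Sigma}^{-1}(\bm{I}_n-\bm{X}(\bm{X}^T\bm{\Sigma}^{-1}\bm{X})^{-1}\bm{X}^T\bm{\Sigma}^{-1})\bm{Z}},$$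 where $\bm{M}$ is diagonal with $M_{ii}=2Z_i-1$; i.e. it is the vector of implied weights of the GLS estimator $\hat\tau_{GLS}$ of the treatment coefficient.
   Context: The GLS estimator of $\tau$ in the model $\bm{Y}=\bm{X}\bm{\beta}+\tau\bm{Z}+\bm{\epsilon}$ with error covariance $\bm{\Sigma}$ is the last coordinate of $\big(\begin{pmatrix}\bm{X} & \bm{Z}\end{pmatrix}^T\bm{\Sigma}^{-1}\begin{pmatrix}\bm{X} & \bm{Z}\end{pmatrix}\big)^{-1}\begin{pmatrix}\bm{X} & \bm{Z}\end{pmatrix}^T\bm{\Sigma}^{-1}\bm{Y}$; its implied weights are the vector $\bm{w}$ above, in the sense that $\hat\tau_{GLS}=\sum_{Z_i=1}w_iY_i-\sum_{Z_i=0}w_iY_i$. *)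

theory Defs
  imports "HOL-Analysis.Analysis"
begin

definition Sigma_mat :: "real \<Rightarrow> real \<Rightarrow> real^'n^'n \<Rightarrow> real^'n^'n" where
  "Sigma_mat s2 r2 S = s2 *\<^sub>R mat 1 + r2 *\<^sub>R S"

definition feasible_w :: "real^'n \<Rightarrow> real^'p^'n \<Rightarrow> real^'n \<Rightarrow> bool" where
  "feasible_w Z X w \<longleftrightarrow>
     (\<Sum>i | Z$i = 1. w$i) = 1 \<and> (\<Sum>i | Z$i = 0. w$i) = 1 \<and>
     (\<Sum>i | Z$i = 1. w$i *\<^sub>R X$i) = (\<Sum>i | Z$i = 0. w$i *\<^sub>R X$i)"

definition objective_w :: "real \<Rightarrow> real \<Rightarrow> ('n \<Rightarrow> real) \<Rightarrow> ('n \<Rightarrow> real^'n)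
      \<Rightarrow> real^'n \<Rightarrow> real^'n \<Rightarrow> real" where
  "objective_w s2 r2 lam v Z w =
     s2 * (\<Sum>i\<in>UNIV. (w$i)^2) +
     r2 * (\<Sum>k\<in>UNIV. lam k *
        ((\<Sum>i | Z$i = 1. w$i * (v k)$i) - (\<Sum>i | Z$i = 0. w$i * (v k)$i))^2)"

definition gls_weights :: "real^'n^'n \<Rightarrow> real^'p^'n \<Rightarrow> real^'n \<Rightarrow> real^'n" where
  "gls_weights Sg X Z =
     (let Si = matrix_inv Sg;
          A = matrix_inv (transpose X ** Si ** X);
          M = (\<chi> i j. if i = j then 2 * Z$i - 1 else 0) :: real^'n^'n;
          num = (mat 1 - Si ** X ** A ** transpose X) ** Si *v Z;
          den = Z \<bullet> ((Si ** (mat 1 - X ** A ** transpose X ** Si)) *v Z)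
      in (1 / den) *\<^sub>R (M *v num))"

definition design :: "real^'p^'n \<Rightarrow> real^'n \<Rightarrow> real^('p option)^'n" where
  "design X Z = (\<chi> i. \<chi> j. case j of None \<Rightarrow> Z$i | Some c \<Rightarrow> X$i$c)"

definition tau_gls :: "real^'n^'n \<Rightarrow> real^'p^'n \<Rightarrow> real^'n \<Rightarrow> real^'n \<Rightarrow> real" where
  "tau_gls Sg X Z Y =
     (let D = design X Z; Si = matrix_inv Sg
      in (matrix_inv (transpose D ** Si ** D) ** transpose D ** Si *v Y) $ None)"

end

theory Submission
  imports Defs
begin

lemma inv_props:
  fixes M :: "real^'n^'n"
  assumes "invertible M"
  shows "M ** matrix_inv M = mat 1" "matrix_inv M ** M = mat 1"
  using someI_ex[OF assms[unfolded invertible_def]] unfolding matrix_inv_def by auto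
lemma inv_sym:
  fixes M :: "real^'n^'n"
  assumes "invertible M" "transpose M = M"
  shows "transpose (matrix_inv M) = matrix_inv M"
proof -
  let ?N = "matrix_inv M"
  have "transpose ?N ** M = transpose ?N ** transpose M" using assms(2) by simp
  also have "\<dots> = transpose (M ** ?N)" by (simp only: matrix_transpose_mul)
  also have "\<dots> = mat 1" using inv_props(1)[OF assms(1)] by simp
  finally have 1: "transpose ?N ** M = mat 1" .
  have "transpose ?N = transpose ?N ** (M ** ?N)" using inv_props(1)[OF assms(1)] by simp
  also have "\<dots> = (transpose ?N ** M) ** ?N" by (simp only: matrix_mul_assoc)
  also have "\<dots> = ?N" using 1 by simp
  finally show ?thesis .
qed

lemma inj_invertible:
  fixes M :: "real^'n^'n"
  assumes "\<And>x. M *v x = 0 \<Longrightarrow> x = 0"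
  shows "invertible M"
proof -
  have "\<exists>B. B ** M = mat 1" using assms matrix_left_invertible_ker[of M] by blast
  thus ?thesis using invertible_left_inverse[of M] by blast
qed

lemma dot_mv: "(x::real^'m) \<bullet> ((A::real^'n^'m) *v y) = (transpose A *v x) \<bullet> y"
  by (simp add: dot_lmul_matrix)

lemma tmv_sum: "transpose (X::real^'p^'n) *v s = (\<Sum>i\<in>UNIV. s$i *\<^sub>R X$i)"
  by (simp add: vec_eq_iff matrix_vector_mult_def transpose_def sum_component mult.commute
      del: transpose_matrix_vector)

lemma signed_sum:
  fixes g :: "'n::finite \<Rightarrow> 'a::real_vector" and Z w :: "real^'n"
  assumes Z01: "\<forall>i. Z$i = 0 \<or> Z$i = 1"
  shows "(\<Sum>i\<in>UNIV. ((2*Z$i-1)*w$i) *\<^sub>R g i) = (\<Sum>i|Z$i=1. w$i *\<^sub>R g i) - (\<Sum>i|Z$i=0. w$i *\<^sub>R g i)"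
proof -
  have U: "UNIV = {i. Z$i=1} \<union> {i. Z$i=0}" using Z01 by auto
  have "(\<Sum>i\<in>UNIV. ((2*Z$i-1)*w$i) *\<^sub>R g i) = (\<Sum>i|Z$i=1. ((2*Z$i-1)*w$i) *\<^sub>R g i) + (\<Sum>i|Z$i=0. ((2*Z$i-1)*w$i) *\<^sub>R g i)"
    by (subst U, rule sum.union_disjoint) auto
  also have "(\<Sum>i|Z$i=1. ((2*Z$i-1)*w$i) *\<^sub>R g i) = (\<Sum>i|Z$i=1. w$i *\<^sub>R g i)"
    by (rule sum.cong) auto
  also have "(\<Sum>i|Z$i=0. ((2*Z$i-1)*w$i) *\<^sub>R g i) = - (\<Sum>i|Z$i=0. w$i *\<^sub>R g i)"
    by (simp add: sum_negf[symmetric])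
  finally show ?thesis by (simp only: diff_conv_add_uminus)
qed

lemma spectral:
  fixes S :: "real^'n^'n" and v :: "'n \<Rightarrow> real^'n"
  assumes orthonormal: "\<forall>k l. v k \<bullet> v l = (if k = l then 1 else 0)"
    and eigen: "\<forall>k. S *v v k = lam k *\<^sub>R v k"
  shows "s \<bullet> (S *v s) = (\<Sum>k\<in>UNIV. lam k * (v k \<bullet> s)^2)"
proof -
  define V where "V = (\<chi> k. v k)"
  have "V ** transpose V = mat 1"
    using orthonormal by (simp add: vec_eq_iff matrix_matrix_mult_def transpose_def V_def mat_def inner_vec_def)
  hence VV: "transpose V ** V = mat 1" using matrix_left_right_inverse by blast
  have Vs: "V *v s = (\<chi> k. v k \<bullet> s)"
    by (simp add: vec_eq_iff matrix_vector_mult_def V_def inner_vec_def)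
  have "s = (transpose V ** V) *v s" using VV by simp
  also have "\<dots> = transpose V *v (V *v s)" by (simp add: matrix_vector_mul_assoc)
  also have "\<dots> = (\<Sum>k\<in>UNIV. (v k \<bullet> s) *\<^sub>R v k)" unfolding tmv_sum Vs by (simp add: V_def)
  finally have sdec: "s = (\<Sum>k\<in>UNIV. (v k \<bullet> s) *\<^sub>R v k)" .
  have "S *v s = (\<Sum>k\<in>UNIV. (v k \<bullet> s) *\<^sub>R (lam k *\<^sub>R v k))"
    by (subst sdec) (simp add: vec.sum matrix_vector_mult_scaleR eigen)
  hence "s \<bullet> (S *v s) = (\<Sum>k\<in>UNIV. (v k \<bullet> s) * lam k * (s \<bullet> v k))"
    by (simp add: inner_sum_right)
  thus ?thesis by (simp only: inner_commute power2_eq_square mult.commute mult.left_commute)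
qed

lemma Sg_mv: "Sigma_mat s2 r2 S *v y = s2 *\<^sub>R y + r2 *\<^sub>R (S *v y)"
  by (simp add: Sigma_mat_def matrix_vector_mult_add_rdistrib scaleR_matrix_vector_assoc[symmetric])
lemma design_mv: "design X Z *v q = X *v (\<chi> c. q$Some c) + q$None *\<^sub>R Z"
  by (simp add: vec_eq_iff matrix_vector_mult_def design_def UNIV_option_conv sum.reindex mult.commute)
lemma design_tmv: "transpose (design X Z) *v y = (\<chi> j. case j of None \<Rightarrow> Z \<bullet> y | Some c \<Rightarrow> (transpose X *v y)$c)"
  by (simp add: vec_eq_iff matrix_vector_mult_def design_def transpose_def inner_vec_def mult.commute split: option.split del: transpose_matrix_vector)
lemma Sg_sym: "transpose S = S \<Longrightarrow> transpose (Sigma_mat s2 r2 S) = Sigma_mat s2 r2 S"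
  unfolding Sigma_mat_def by (simp add: vec_eq_iff transpose_def mat_def)

theorem proposition2:
  fixes Z :: "real^('n::{finite,wellorder})"
    and X :: "real^('p::{finite,wellorder})^('n::{finite,wellorder})"
    and sigma2 rho2 :: real
    and S :: "real^('n::{finite,wellorder})^('n::{finite,wellorder})"
    and v :: "('n::{finite,wellorder}) \<Rightarrow> real^('n::{finite,wellorder})"
    and lam :: "('n::{finite,wellorder}) \<Rightarrow> real"
  assumes Z01: "\<forall>i. Z$i = 0 \<or> Z$i = 1"
    and treated: "\<exists>i. Z$i = 1" and control: "\<exists>i. Z$i = 0"
    and ones: "\<forall>i. X$i$(LEAST j. True) = 1"
    and sigma_pos: "sigma2 > 0" and rho_nonneg: "rho2 \<ge> 0"
    and S_sym: "transpose S = S"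
    and S_psd: "\<forall>x. 0 \<le> x \<bullet> (S *v x)"
    and orthonormal: "\<forall>k l. v k \<bullet> v l = (if k = l then 1 else 0)"
    and eigen: "\<forall>k. S *v v k = lam k *\<^sub>R v k"
    and lam_sorted: "\<forall>k l. k \<le> l \<longrightarrow> lam l \<le> lam k"
    and lam_nonneg: "\<forall>k. lam k \<ge> 0"
    and XSX_inv: "invertible (transpose X ** matrix_inv (Sigma_mat sigma2 rho2 S) ** X)"
    and den_nz: "Z \<bullet> ((matrix_inv (Sigma_mat sigma2 rho2 S) **
        (mat 1 - X ** matrix_inv (transpose X ** matrix_inv (Sigma_mat sigma2 rho2 S) ** X)
          ** transpose X ** matrix_inv (Sigma_mat sigma2 rho2 S))) *v Z) \<noteq> 0"
  shows "feasible_w Z X (gls_weights (Sigma_mat sigma2 rho2 S) X Z)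
    \<and> (\<forall>w. feasible_w Z X w \<and> w \<noteq> gls_weights (Sigma_mat sigma2 rho2 S) X Z \<longrightarrow>
          objective_w sigma2 rho2 lam v Z (gls_weights (Sigma_mat sigma2 rho2 S) X Z)
            < objective_w sigma2 rho2 lam v Z w)
    \<and> (\<forall>Y. tau_gls (Sigma_mat sigma2 rho2 S) X Z Y =
          (\<Sum>i | Z$i = 1. (gls_weights (Sigma_mat sigma2 rho2 S) X Z)$i * Y$i)
          - (\<Sum>i | Z$i = 0. (gls_weights (Sigma_mat sigma2 rho2 S) X Z)$i * Y$i))"
proof -
  define Sg where "Sg = Sigma_mat sigma2 rho2 S"
  define Si where "Si = matrix_inv Sg"
  define G where "G = transpose X ** Si ** X"
  define A where "A = matrix_inv G"
  define c where "c = A *v (transpose X *v (Si *v Z))"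
  define u where "u = Si *v Z - Si *v (X *v c)"
  define den where "den = Z \<bullet> u"
  define W where "W = gls_weights Sg X Z"
  define sg where "sg = (\<lambda>w. \<chi> i. (2*Z$i-1) * w$i)"
  have Sgmv: "\<And>y. Sg *v y = sigma2 *\<^sub>R y + rho2 *\<^sub>R (S *v y)" unfolding Sg_def by (rule Sg_mv)
  have Sg_pos: "\<And>y. sigma2 * (y \<bullet> y) \<le> y \<bullet> (Sg *v y)"
  proof -
    fix y :: "real^('n::{finite,wellorder})"
    have "0 \<le> rho2 * (y \<bullet> (S *v y))" using S_psd rho_nonneg by simp
    thus "sigma2 * (y \<bullet> y) \<le> y \<bullet> (Sg *v y)" by (simp add: Sgmv inner_add_right)
  qed
  have Sg_inj: "\<And>y. Sg *v y = 0 \<Longrightarrow> y = 0"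
  proof -
    fix y :: "real^('n::{finite,wellorder})" assume "Sg *v y = 0"
    hence "sigma2 * (y \<bullet> y) \<le> 0" using Sg_pos[of y] by simp
    hence "y \<bullet> y \<le> 0" using sigma_pos by (simp add: mult_le_0_iff)
    thus "y = 0" by (metis inner_eq_zero_iff inner_ge_zero order_antisym)
  qed
  have Sg_invb: "invertible Sg" by (rule inj_invertible) (rule Sg_inj)
  have Sg_sym': "transpose Sg = Sg" unfolding Sg_def using S_sym by (rule Sg_sym)
  have SgSi: "Sg ** Si = mat 1" and SiSg: "Si ** Sg = mat 1"
    using inv_props[OF Sg_invb] by (simp_all add: Si_def)
  have Si_sym: "transpose Si = Si" unfolding Si_def by (rule inv_sym[OF Sg_invb Sg_sym'])
  have G_sym: "transpose G = G" unfolding G_def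
    by (simp add: matrix_transpose_mul Si_sym matrix_mul_assoc)
  have G_inv: "invertible G" using XSX_inv by (simp add: G_def Si_def Sg_def)
  have GA: "G ** A = mat 1" and AG: "A ** G = mat 1"
    using inv_props[OF G_inv] by (simp_all add: A_def)
  have A_sym: "transpose A = A" unfolding A_def by (rule inv_sym[OF G_inv G_sym])
  have SgSiv: "\<And>y. Sg *v (Si *v y) = y" by (simp add: matrix_vector_mul_assoc SgSi)
  have Gv: "\<And>y. G *v y = transpose X *v (Si *v (X *v y))"
    by (simp only: G_def matrix_vector_mul_assoc matrix_mul_assoc)
  have AGv: "\<And>y. A *v (G *v y) = y" by (simp add: matrix_vector_mul_assoc AG)
  have GAv: "\<And>y. G *v (A *v y) = y" by (simp add: matrix_vector_mul_assoc GA)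
  have XTu: "transpose X *v u = 0"
  proof -
    have "transpose X *v u = transpose X *v (Si *v Z) - G *v c"
      unfolding u_def Gv by (simp only: vec.diff)
    also have "\<dots> = 0" unfolding c_def GAv by simp
    finally show ?thesis .
  qed
  have Sgu: "Sg *v u = Z - X *v c" by (simp add: u_def vec.diff SgSiv)
  have den_eq: "Z \<bullet> ((Si ** (mat 1 - X ** A ** transpose X ** Si)) *v Z) = den"
    by (simp add: den_def u_def c_def matrix_vector_mul_assoc[symmetric]
        matrix_vector_mult_diff_rdistrib vec.diff del: transpose_matrix_vector)
  have num_eq: "((mat 1 - Si ** X ** A ** transpose X) ** Si) *v Z = u"
    by (simp add: u_def c_def matrix_vector_mul_assoc[symmetric]
        matrix_vector_mult_diff_rdistrib vec.diff del: transpose_matrix_vector)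
  have den_nz': "den \<noteq> 0"
  proof -
    have "den = Z \<bullet> ((matrix_inv (Sigma_mat sigma2 rho2 S) **
        (mat 1 - X ** matrix_inv (transpose X ** matrix_inv (Sigma_mat sigma2 rho2 S) ** X)
          ** transpose X ** matrix_inv (Sigma_mat sigma2 rho2 S))) *v Z)"
      using den_eq unfolding A_def G_def Si_def Sg_def by simp
    thus ?thesis using den_nz by simp
  qed
  have W_eq: "W = (1/den) *\<^sub>R (\<chi> i. (2*Z$i-1) * u$i)"
  proof -
    have "W = (1/den) *\<^sub>R ((\<chi> i j. if i = j then 2 * Z$i - 1 else 0) *v u)"
      unfolding W_def gls_weights_def Let_def Si_def[symmetric] G_def[symmetric] A_def[symmetric]
        num_eq den_eq ..
    also have "(\<chi> i j. if i = j then 2 * Z$i - 1 else 0) *v u = (\<chi> i. (2*Z$i-1) * u$i)"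
      unfolding vec_eq_iff matrix_vector_mult_def
      by (simp add: if_distrib[of "\<lambda>x. x * _"] cong: if_cong)
    finally show ?thesis .
  qed
  have sq1: "\<And>i. (2*Z$i-1) * (2*Z$i-1) = (1::real)"
  proof -
    fix i
    have "Z$i = 0 \<or> Z$i = 1" using Z01 by blast
    thus "(2*Z$i-1) * (2*Z$i-1) = (1::real)" by auto
  qed
  have sgsg: "\<And>w. sg (sg w) = w"
    by (simp add: sg_def vec_eq_iff mult.assoc[symmetric] sq1)
  have sW: "sg W = (1/den) *\<^sub>R u"
    by (simp add: W_eq sg_def vec_eq_iff mult.assoc[symmetric] sq1 mult.left_commute[of "1/den"])
  have c0: "\<And>i. X$i$(LEAST j. True) = 1" using ones by simp
  have e1: "\<And>w. Z \<bullet> sg w = (\<Sum>i | Z$i = 1. w$i)"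
  proof -
    fix w :: "real^('n::{finite,wellorder})"
    have "Z \<bullet> sg w = (\<Sum>i\<in>UNIV. ((2*Z$i-1)*w$i) *\<^sub>R Z$i)"
      by (simp add: inner_vec_def sg_def mult.commute)
    also have "\<dots> = (\<Sum>i | Z$i = 1. w$i *\<^sub>R Z$i) - (\<Sum>i | Z$i = 0. w$i *\<^sub>R Z$i)"
      by (rule signed_sum[OF Z01])
    also have "(\<Sum>i | Z$i = 1. w$i *\<^sub>R Z$i) = (\<Sum>i | Z$i = 1. w$i)"
      by (rule sum.cong) auto
    also have "(\<Sum>i | Z$i = 0. w$i *\<^sub>R Z$i) = 0"
      by (rule sum.neutral) auto
    finally show "Z \<bullet> sg w = (\<Sum>i | Z$i = 1. w$i)" by simp
  qed
  have e2: "\<And>w. transpose X *v sg w = (\<Sum>i | Z$i = 1. w$i *\<^sub>R X$i) - (\<Sum>i | Z$i = 0. w$i *\<^sub>R X$i)"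
  proof -
    fix w :: "real^('n::{finite,wellorder})"
    have "transpose X *v sg w = (\<Sum>i\<in>UNIV. ((2*Z$i-1)*w$i) *\<^sub>R X$i)"
      unfolding tmv_sum by (simp add: sg_def)
    also have "\<dots> = (\<Sum>i | Z$i = 1. w$i *\<^sub>R X$i) - (\<Sum>i | Z$i = 0. w$i *\<^sub>R X$i)"
      by (rule signed_sum[OF Z01])
    finally show "transpose X *v sg w = (\<Sum>i | Z$i = 1. w$i *\<^sub>R X$i) - (\<Sum>i | Z$i = 0. w$i *\<^sub>R X$i)" .
  qed
  have e3: "\<And>w. (transpose X *v sg w)$(LEAST j. True) = (\<Sum>i | Z$i = 1. w$i) - (\<Sum>i | Z$i = 0. w$i)"
    unfolding e2 by (simp add: sum_component c0 del: transpose_matrix_vector)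
  have feas_iff: "\<And>w. feasible_w Z X w \<longleftrightarrow> Z \<bullet> sg w = 1 \<and> transpose X *v sg w = 0"
  proof
    fix w :: "real^('n::{finite,wellorder})"
    assume "feasible_w Z X w"
    thus "Z \<bullet> sg w = 1 \<and> transpose X *v sg w = 0"
      unfolding feasible_w_def e1 e2 by simp
  next
    fix w :: "real^('n::{finite,wellorder})"
    assume a: "Z \<bullet> sg w = 1 \<and> transpose X *v sg w = 0"
    hence "(transpose X *v sg w)$(LEAST j. True) = 0" by simp
    hence h: "(\<Sum>i | Z$i = 1. w$i) - (\<Sum>i | Z$i = 0. w$i) = 0" unfolding e3 .
    have h1: "(\<Sum>i | Z$i = 1. w$i) = 1" using a e1[of w] by simp
    have h2: "(\<Sum>i | Z$i = 1. w$i *\<^sub>R X$i) - (\<Sum>i | Z$i = 0. w$i *\<^sub>R X$i) = 0"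
      using a e2[of w] by simp
    show "feasible_w Z X w" unfolding feasible_w_def using h h1 h2 by simp
  qed
  have obj_eq: "\<And>w. objective_w sigma2 rho2 lam v Z w = sg w \<bullet> (Sg *v sg w)"
  proof -
    fix w :: "real^('n::{finite,wellorder})"
    have 1: "(\<Sum>i\<in>UNIV. (w$i)^2) = sg w \<bullet> sg w"
      by (simp add: inner_vec_def sg_def power2_eq_square) (metis (no_types, lifting) mult.assoc mult.left_commute mult_1 sq1)
    have 2: "\<And>k. (\<Sum>i | Z$i = 1. w$i * (v k)$i) - (\<Sum>i | Z$i = 0. w$i * (v k)$i) = v k \<bullet> sg w"
    proof -
      fix k
      have "v k \<bullet> sg w = (\<Sum>i\<in>UNIV. ((2*Z$i-1)*w$i) *\<^sub>R (v k)$i)"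
        by (simp add: inner_vec_def sg_def mult.commute)
      also have "\<dots> = (\<Sum>i | Z$i = 1. w$i *\<^sub>R (v k)$i) - (\<Sum>i | Z$i = 0. w$i *\<^sub>R (v k)$i)"
        by (rule signed_sum[OF Z01])
      finally show "(\<Sum>i | Z$i = 1. w$i * (v k)$i) - (\<Sum>i | Z$i = 0. w$i * (v k)$i) = v k \<bullet> sg w"
        by simp
    qed
    have 3: "sg w \<bullet> (S *v sg w) = (\<Sum>k\<in>UNIV. lam k * (v k \<bullet> sg w)^2)"
      by (rule spectral[OF orthonormal eigen])
    show "objective_w sigma2 rho2 lam v Z w = sg w \<bullet> (Sg *v sg w)"
      unfolding objective_w_def 1 2 3[symmetric] by (simp add: Sgmv inner_add_right)
  qed
  have feasW: "feasible_w Z X W"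
    unfolding feas_iff sW using den_nz' XTu
    by (simp add: matrix_vector_mult_scaleR den_def)
  have optW: "\<forall>w. feasible_w Z X w \<and> w \<noteq> W \<longrightarrow>
          objective_w sigma2 rho2 lam v Z W < objective_w sigma2 rho2 lam v Z w"
  proof (intro allI impI)
    fix w assume a: "feasible_w Z X w \<and> w \<noteq> W"
    define s where "s = sg w"
    define s0 where "s0 = sg W"
    define d where "d = s - s0"
    have "s \<noteq> s0" using a sgsg unfolding s_def s0_def by metis
    hence dnz: "d \<noteq> 0" unfolding d_def by simp
    have fs: "Z \<bullet> s = 1 \<and> transpose X *v s = 0" using a feas_iff s_def by blast
    have fs0: "Z \<bullet> s0 = 1 \<and> transpose X *v s0 = 0" using feasW feas_iff s0_def by blast
    have Xd: "transpose X *v d = 0" using fs fs0 unfolding d_def by (simp only: vec.diff) simp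
    have Zd: "Z \<bullet> d = 0" using fs fs0 unfolding d_def by (simp add: inner_diff_right)
    have Sgs0: "Sg *v s0 = (1/den) *\<^sub>R (Z - X *v c)"
      unfolding s0_def sW by (simp add: matrix_vector_mult_scaleR Sgu)
    have "d \<bullet> (X *v c) = (transpose X *v d) \<bullet> c" by (rule dot_mv)
    hence dXc: "d \<bullet> (X *v c) = 0" using Xd by simp
    have cross1: "d \<bullet> (Sg *v s0) = 0"
      unfolding Sgs0 using Zd dXc by (simp add: inner_diff_right inner_commute)
    have cross2: "s0 \<bullet> (Sg *v d) = 0"
      using cross1 dot_mv[of s0 Sg d] Sg_sym' by (simp add: inner_commute)
    have "s = s0 + d" unfolding d_def by simp
    hence "s \<bullet> (Sg *v s) = s0 \<bullet> (Sg *v s0) + s0 \<bullet> (Sg *v d) + d \<bullet> (Sg *v s0) + d \<bullet> (Sg *v d)"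
      by (simp add: vec.add inner_add_left inner_add_right)
    also have "\<dots> = s0 \<bullet> (Sg *v s0) + d \<bullet> (Sg *v d)" using cross1 cross2 by simp
    finally have expand: "s \<bullet> (Sg *v s) = s0 \<bullet> (Sg *v s0) + d \<bullet> (Sg *v d)" .
    have "0 < sigma2 * (d \<bullet> d)" using dnz sigma_pos by simp
    hence "0 < d \<bullet> (Sg *v d)" using Sg_pos[of d] by linarith
    thus "objective_w sigma2 rho2 lam v Z W < objective_w sigma2 rho2 lam v Z w"
      unfolding obj_eq s_def[symmetric] s0_def[symmetric] expand by simp
  qed
  have tauW: "\<forall>Y. tau_gls Sg X Z Y = (\<Sum>i | Z$i = 1. W$i * Y$i) - (\<Sum>i | Z$i = 0. W$i * Y$i)"
  proof
    fix Y :: "real^('n::{finite,wellorder})"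
    define D where "D = design X Z"
    define B where "B = transpose D ** Si ** D"
    have Bv: "\<And>q. B *v q = transpose D *v (Si *v (D *v q))"
      by (simp only: B_def matrix_vector_mul_assoc matrix_mul_assoc)
    have Dtv: "\<And>y. transpose D *v y = (\<chi> j. case j of None \<Rightarrow> Z \<bullet> y | Some c \<Rightarrow> (transpose X *v y)$c)"
      unfolding D_def by (rule design_tmv)
    have Dv: "\<And>q. D *v q = X *v (\<chi> c. q$Some c) + q$None *\<^sub>R Z"
      unfolding D_def by (rule design_mv)
    have ZSiXc: "\<And>b. Z \<bullet> (Si *v (X *v b)) = (transpose X *v (Si *v Z)) \<bullet> b"
    proof -
      fix b
      have "Z \<bullet> (Si *v (X *v b)) = (Si *v Z) \<bullet> (X *v b)" using dot_mv[of Z Si] Si_sym by simp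
      also have "\<dots> = (transpose X *v (Si *v Z)) \<bullet> b" by (rule dot_mv)
      finally show "Z \<bullet> (Si *v (X *v b)) = (transpose X *v (Si *v Z)) \<bullet> b" .
    qed
    have B_inv: "invertible B"
    proof (rule inj_invertible)
      fix q assume Bq: "B *v q = 0"
      define \<beta> where "\<beta> = (\<chi> c. q$Some c)"
      define t where "t = q$None"
      define r where "r = Si *v (X *v \<beta> + t *\<^sub>R Z)"
      have "transpose D *v r = 0" using Bq unfolding Bv r_def Dv \<beta>_def t_def .
      hence r1: "transpose X *v r = 0" and r2: "Z \<bullet> r = 0"
        unfolding Dtv by (auto simp: vec_eq_iff split: option.splits)
      have "transpose X *v r = G *v \<beta> + t *\<^sub>R (transpose X *v (Si *v Z))"
        unfolding r_def Gv by (simp add: vec.add matrix_vector_mult_scaleR del: transpose_matrix_vector)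
      hence "G *v \<beta> = - t *\<^sub>R (transpose X *v (Si *v Z))" using r1
        by (simp add: eq_neg_iff_add_eq_0 del: transpose_matrix_vector)
      hence "A *v (G *v \<beta>) = - t *\<^sub>R c" unfolding c_def by (simp add: vec.neg matrix_vector_mult_scaleR del: transpose_matrix_vector)
      hence bt: "\<beta> = - t *\<^sub>R c" unfolding AGv .
      have "Z \<bullet> r = Z \<bullet> (Si *v (X *v \<beta>)) + t * (Z \<bullet> (Si *v Z))"
        unfolding r_def by (simp add: vec.add matrix_vector_mult_scaleR inner_add_right del: transpose_matrix_vector)
      also have "\<dots> = t * den"
        unfolding bt ZSiXc den_def u_def
        by (simp add: inner_diff_right matrix_vector_mult_scaleR c_def algebra_simps
            ZSiXc[symmetric] del: transpose_matrix_vector)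
      finally have "t * den = 0" using r2 by simp
      hence t0: "t = 0" using den_nz' by simp
      hence b0: "\<beta> = 0" using bt by simp
      show "q = 0"
      proof (subst vec_eq_iff, rule allI)
        fix j show "q$j = 0$j"
        proof (cases j)
          case None thus ?thesis using t0 t_def by simp
        next
          case (Some c') thus ?thesis using b0 \<beta>_def by (simp add: vec_eq_iff)
        qed
      qed
    qed
    have BiB: "matrix_inv B ** B = mat 1" using inv_props(2)[OF B_inv] .
    define t where "t = (u \<bullet> Y) / den"
    define \<beta> where "\<beta> = A *v (transpose X *v (Si *v (Y - t *\<^sub>R Z)))"
    define q where "q = (\<chi> j. case j of None \<Rightarrow> t | Some c \<Rightarrow> \<beta>$c)"
    have qb: "(\<chi> c. q$Some c) = \<beta>" by (simp add: q_def vec_eq_iff)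
    have qt: "q$None = t" by (simp add: q_def)
    have Dq: "D *v q = X *v \<beta> + t *\<^sub>R Z" unfolding Dv qb qt ..
    have pa: "transpose X *v (Si *v (D *v q)) = transpose X *v (Si *v Y)"
    proof -
      have "transpose X *v (Si *v (D *v q)) = G *v \<beta> + t *\<^sub>R (transpose X *v (Si *v Z))"
        unfolding Dq Gv by (simp add: vec.add matrix_vector_mult_scaleR del: transpose_matrix_vector)
      also have "G *v \<beta> = transpose X *v (Si *v Y) - t *\<^sub>R (transpose X *v (Si *v Z))"
        unfolding \<beta>_def GAv by (simp add: vec.diff matrix_vector_mult_scaleR del: transpose_matrix_vector)
      finally show ?thesis by simp
    qed
    have SiXc: "\<And>y. c \<bullet> (transpose X *v (Si *v y)) = (Si *v (X *v c)) \<bullet> y"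
    proof -
      fix y
      have "c \<bullet> (transpose X *v (Si *v y)) = (X *v c) \<bullet> (Si *v y)"
        using dot_mv[of c "transpose X" "Si *v y"] by (simp del: transpose_matrix_vector)
      also have "\<dots> = (Si *v (X *v c)) \<bullet> y" using dot_mv[of "X *v c" Si y] Si_sym by simp
      finally show "c \<bullet> (transpose X *v (Si *v y)) = (Si *v (X *v c)) \<bullet> y" .
    qed
    have ZSi: "\<And>y. Z \<bullet> (Si *v y) = (Si *v Z) \<bullet> y" using dot_mv[of Z Si] Si_sym by simp
    have pb: "Z \<bullet> (Si *v (D *v q)) = Z \<bullet> (Si *v Y)"
    proof -
      have "Z \<bullet> (Si *v (X *v \<beta>)) = (transpose X *v (Si *v Z)) \<bullet> \<beta>" by (rule ZSiXc)
      also have "\<dots> = c \<bullet> (transpose X *v (Si *v (Y - t *\<^sub>R Z)))"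
        unfolding \<beta>_def c_def
        using dot_mv[of "transpose X *v (Si *v Z)" A "transpose X *v (Si *v (Y - t *\<^sub>R Z))"] A_sym
        by (simp del: transpose_matrix_vector)
      also have "\<dots> = (Si *v (X *v c)) \<bullet> Y - t * ((Si *v (X *v c)) \<bullet> Z)"
        unfolding SiXc by (simp add: inner_diff_right)
      finally have 1: "Z \<bullet> (Si *v (X *v \<beta>)) = (Si *v (X *v c)) \<bullet> Y - t * ((Si *v (X *v c)) \<bullet> Z)" .
      have "t * den = u \<bullet> Y" unfolding t_def using den_nz' by simp
      hence 2: "t * (Z \<bullet> (Si *v Z) - Z \<bullet> (Si *v (X *v c))) = (Si *v Z) \<bullet> Y - (Si *v (X *v c)) \<bullet> Y"
        unfolding den_def u_def by (simp add: inner_diff_right inner_diff_left)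
      show ?thesis unfolding Dq using 1 2 ZSi[of Y]
        by (simp add: vec.add matrix_vector_mult_scaleR inner_add_right inner_commute algebra_simps
            del: transpose_matrix_vector)
    qed
    have Bq: "B *v q = transpose D *v (Si *v Y)"
      unfolding Bv Dtv using pa pb by (simp add: vec_eq_iff split: option.split del: transpose_matrix_vector)
    have "tau_gls Sg X Z Y = (matrix_inv B ** transpose D ** Si *v Y)$None"
      unfolding tau_gls_def Let_def Si_def[symmetric] D_def[symmetric] B_def ..
    also have "matrix_inv B ** transpose D ** Si *v Y = matrix_inv B *v (B *v q)"
      unfolding Bq by (simp only: matrix_vector_mul_assoc matrix_mul_assoc)
    also have "\<dots> = q" by (simp add: matrix_vector_mul_assoc BiB)
    finally have tau: "tau_gls Sg X Z Y = t" using qt by simp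
    have "(\<Sum>i | Z$i = 1. W$i * Y$i) - (\<Sum>i | Z$i = 0. W$i * Y$i) = (\<Sum>i\<in>UNIV. ((2*Z$i-1)*W$i) *\<^sub>R Y$i)"
      using signed_sum[OF Z01, of W "\<lambda>i. Y$i"] by simp
    also have "\<dots> = sg W \<bullet> Y" by (simp add: inner_vec_def sg_def)
    also have "\<dots> = t" unfolding sW t_def by simp
    finally show "tau_gls Sg X Z Y = (\<Sum>i | Z$i = 1. W$i * Y$i) - (\<Sum>i | Z$i = 0. W$i * Y$i)"
      using tau by simp
  qed
  show ?thesis using feasW optW tauW unfolding W_def Sg_def by blast
qed

end
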